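(* Let $\hat{\mathbf Q}=\tilde{\mathbf Q}_{st}+\tilde{\mathbf Q}_{\mathcal I}\varepsilon$ be a $2\times2$ dual quaternion Hermitian matrix with $\tilde{\mathbf Q}_{st}=\begin{bmatrix} a&\tilde c\\ \tilde c^\ast&b\end{bmatrix}$, $\tilde c\ne0$. Let $\lambda_1,\lambda_2$ be the solutions of $(a-x)(b-x)=\tilde c^\ast\tilde c$, and let $\tilde{\mathbf U}$ be the unitary quaternion matrix $$\tilde{\mathbf U}=\begin{bmatrix}\frac{-\tilde c}{((a-\lambda_1)^2+\tilde c^\ast\tilde c)^{1/2}} & \frac{-\tilde c}{((a-\lambda_2)^2+\tilde c^\ast\tilde c)^{1/2}}\\ \frac{a-\lambda_1}{((a-\lambda_1)^2+\tilde c^\ast\tilde c)^{1/2}} & \frac{a-\lambda_2}{((a-\lambda_2)^2+\tilde c^\ast\tilde c)^{1/2}}\end{bmatrix},$$ which satisfies $\tilde{\mathbf U}^\ast\tilde{\mathbf Q}_{st}\tilde{\mathbf U}=\mathrm{diag}(\lambda_1,\lambda_2)$. Write $\tilde{\mathbf U}^\ast\tilde{\mathbf Q}_{\mathcal I}\tilde{\mathbf U}=\begin{bmatrix}x&\tilde z\\ \tilde z^\ast&y\end{bmatrix}$ and define $$\hat{\mathbf V}=\begin{bmatrix}1&\frac{\tilde z}{\lambda_2-\lambda_1}\varepsilon\\ \frac{\tilde z^\ast}{\lambda_1-\lambda_2}\varepsilon&1\end{bmatrix}.$$ Then $\hat{\mathbf V}^\ast\tilde{\mathbf U}^\ast\hat{\mathbf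 Q}^\ast\tilde{\mathbf U}\hat{\mathbf V}=\mathrm{diag}(\lambda_1+x\varepsilon,\lambda_2+y\varepsilon)$, which is a diagonal dual number matrix, and $\tilde{\mathbf U}\hat{\mathbf V}$ is a unitary dual quaternion matrix.
   Context: Quaternions $q=q_0+q_1\mathbf i+q_2\mathbf j+q_3\mathbf k$ (real $q_i$, Hamilton multiplication), conjugate $q^\ast=q_0-q_1\mathbf i-q_2\mathbf j-q_3\mathbf k$. A dual quaternion is $q_{st}+q_{\mathcal I}\varepsilon$ with quaternions $q_{st},q_{\mathcal I}$, where $\varepsilon$ commutes with quaternions, $\varepsilon\ne0$, $\varepsilon^2=0$; multiplication $(p_{st}+p_{\mathcal I}\varepsilon)(q_{st}+q_{\mathcal I}\varepsilon)=p_{st}q_{st}+(p_{st}q_{\mathcal I}+p_{\mathcal I}q_{st})\varepsilon$; conjugate $q_{st}^\ast+q_{\mathcal I}^\ast\varepsilon$. Dual numbers are dual quaternions with real standard and dual parts. A dual quaternion matrix is Hermitian if it equals its conjugate transpose and unitary if $\hat{\mathbf U}^\ast\hat{\mathbf U}=\hat{\mathbf U}\hat{\mathbf U}^\ast=\hat{\mathbf I}$. *)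

theory Defs
  imports "HOL-Analysis.Analysis"
begin

codatatype quat = Quat (Re: real) (Im1: real) (Im2: real) (Im3: real)

lemma quat_eqI [intro?]:
  "\<lbrakk>Re x = Re y; Im1 x = Im1 y; Im2 x = Im2 y; Im3 x = Im3 y\<rbrakk> \<Longrightarrow> x = y"
  by (rule quat.expand) simp

lemma quat_eq_iff: "x = y \<longleftrightarrow> Re x = Re y \<and> Im1 x = Im1 y \<and> Im2 x = Im2 y \<and> Im3 x = Im3 y"
  by (auto intro: quat.expand)

instantiation quat :: real_vector
begin

primcorec zero_quat where
  "Re 0 = 0" | "Im1 0 = 0" | "Im2 0 = 0" | "Im3 0 = 0"

primcorec plus_quat where
  "Re (x + y) = Re x + Re y" | "Im1 (x + y) = Im1 x + Im1 y"
| "Im2 (x + y) = Im2 x + Im2 y" | "Im3 (x + y) = Im3 x + Im3 y"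

primcorec uminus_quat where
  "Re (- x) = - Re x" | "Im1 (- x) = - Im1 x" | "Im2 (- x) = - Im2 x" | "Im3 (- x) = - Im3 x"

primcorec minus_quat where
  "Re (x - y) = Re x - Re y" | "Im1 (x - y) = Im1 x - Im1 y"
| "Im2 (x - y) = Im2 x - Im2 y" | "Im3 (x - y) = Im3 x - Im3 y"

primcorec scaleR_quat where
  "Re (scaleR r x) = r * Re x" | "Im1 (scaleR r x) = r * Im1 x"
| "Im2 (scaleR r x) = r * Im2 x" | "Im3 (scaleR r x) = r * Im3 x"

instance
  by standard (auto simp: quat_eq_iff algebra_simps)

end

instantiation quat :: real_algebra_1
begin

primcorec one_quat where
  "Re 1 = 1" | "Im1 1 = 0" | "Im2 1 = 0" | "Im3 1 = 0"

primcorec times_quat where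
  "Re (x * y) = Re x * Re y - Im1 x * Im1 y - Im2 x * Im2 y - Im3 x * Im3 y"
| "Im1 (x * y) = Re x * Im1 y + Im1 x * Re y + Im2 x * Im3 y - Im3 x * Im2 y"
| "Im2 (x * y) = Re x * Im2 y - Im1 x * Im3 y + Im2 x * Re y + Im3 x * Im1 y"
| "Im3 (x * y) = Re x * Im3 y + Im1 x * Im2 y - Im2 x * Im1 y + Im3 x * Re y"

instance
  by standard (auto simp: quat_eq_iff algebra_simps)

end

primcorec qcnj :: "quat \<Rightarrow> quat" where
  "Re (qcnj x) = Re x" | "Im1 (qcnj x) = - Im1 x" | "Im2 (qcnj x) = - Im2 x" | "Im3 (qcnj x) = - Im3 x"

text \<open>A dual quaternion \<open>q_st + q_I \<epsilon>\<close> is represented by the pair of its standard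
  part \<open>dst\<close> and its infinitesimal (dual) part \<open>dinf\<close>.\<close>
datatype dquat = DQ (dst: quat) (dinf: quat)

lemma dquat_eq_iff: "p = q \<longleftrightarrow> dst p = dst q \<and> dinf p = dinf q"
  by (cases p; cases q) auto

instantiation dquat :: ring_1
begin

definition "0 = DQ 0 0"
definition "1 = DQ 1 0"
definition "p + q = DQ (dst p + dst q) (dinf p + dinf q)"
definition "- p = DQ (- dst p) (- dinf p)"
definition "p - q = DQ (dst p - dst q) (dinf p - dinf q)"
definition "p * q = DQ (dst p * dst q) (dst p * dinf q + dinf p * dst q)"

instance
  by standard (auto simp: dquat_eq_iff zero_dquat_def one_dquat_def plus_dquat_def
      uminus_dquat_def minus_dquat_def times_dquat_def algebra_simps)

end

definition eps :: dquat where "eps = DQ 0 1"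

definition dq_of :: "quat \<Rightarrow> dquat" where "dq_of q = DQ q 0"

definition dcnj :: "dquat \<Rightarrow> dquat" where "dcnj p = DQ (qcnj (dst p)) (qcnj (dinf p))"

definition dual_number :: "dquat \<Rightarrow> bool" where
  "dual_number p \<longleftrightarrow> dst p \<in> range of_real \<and> dinf p \<in> range of_real"

definition mat2 :: "'a \<Rightarrow> 'a \<Rightarrow> 'a \<Rightarrow> 'a \<Rightarrow> 'a ^ 2 ^ 2" where
  "mat2 p q r s = (\<chi> i j. if i = 1 then (if j = 1 then p else q) else (if j = 1 then r else s))"

definition qct :: "quat ^ 'n ^ 'm \<Rightarrow> quat ^ 'm ^ 'n" where
  "qct A = (\<chi> i j. qcnj (A $ j $ i))"

definition dct :: "dquat ^ 'n ^ 'm \<Rightarrow> dquat ^ 'm ^ 'n" where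
  "dct A = (\<chi> i j. dcnj (A $ j $ i))"

definition dq_mat :: "quat ^ 'n ^ 'm \<Rightarrow> dquat ^ 'n ^ 'm" where
  "dq_mat A = (\<chi> i j. dq_of (A $ i $ j))"

definition st_mat :: "dquat ^ 'n ^ 'm \<Rightarrow> quat ^ 'n ^ 'm" where
  "st_mat A = (\<chi> i j. dst (A $ i $ j))"

definition inf_mat :: "dquat ^ 'n ^ 'm \<Rightarrow> quat ^ 'n ^ 'm" where
  "inf_mat A = (\<chi> i j. dinf (A $ i $ j))"

definition dq_hermitian :: "dquat ^ 'n ^ 'n \<Rightarrow> bool" where
  "dq_hermitian A \<longleftrightarrow> dct A = A"

definition q_unitary :: "quat ^ 'n ^ 'n \<Rightarrow> bool" where
  "q_unitary U \<longleftrightarrow> qct U ** U = mat 1 \<and> U ** qct U = mat 1"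

definition dq_unitary :: "dquat ^ 'n ^ 'n \<Rightarrow> bool" where
  "dq_unitary U \<longleftrightarrow> dct U ** U = mat 1 \<and> U ** dct U = mat 1"

definition dn_diagonal :: "dquat ^ 'n ^ 'n \<Rightarrow> bool" where
  "dn_diagonal A \<longleftrightarrow> (\<forall>i j. i \<noteq> j \<longrightarrow> A $ i $ j = 0) \<and> (\<forall>i j. dual_number (A $ i $ j))"

end

theory Submission
  imports Defs
begin


lemma mat2_eq_iff: "mat2 p q r s = mat2 p' q' r' s' \<longleftrightarrow> p = p' \<and> q = q' \<and> r = r' \<and> s = s'"
  unfolding mat2_def by (auto simp: vec_eq_iff forall_2)

lemma mat2_idx: "mat2 p q r s $ 1 $ 1 = p" "mat2 p q r s $ 1 $ 2 = q"
  "mat2 p q r s $ 2 $ 1 = r" "mat2 p q r s $ 2 $ 2 = s"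
  unfolding mat2_def by auto

lemma mat2_of: "(A::'a^2^2) = mat2 (A$1$1) (A$1$2) (A$2$1) (A$2$2)"
  unfolding mat2_def by (auto simp: vec_eq_iff forall_2)

lemma mat2_mult: "mat2 p q r s ** mat2 p2 q2 r2 s2 =
   mat2 (p * p2 + q * r2) (p * q2 + q * s2) (r * p2 + s * r2) (r * q2 + s * s2)"
  by (subst mat2_of) (simp add: matrix_matrix_mult_def sum_2 mat2_idx)

lemma mat1_2: "(mat 1 :: 'a::{zero,one}^2^2) = mat2 1 0 0 1"
  by (subst mat2_of) (simp add: mat_def)

lemma qct_mat2: "qct (mat2 p q r s) = mat2 (qcnj p) (qcnj r) (qcnj q) (qcnj s)"
  by (subst mat2_of) (simp add: qct_def mat2_idx)



lemma qcnj_mult: "qcnj (p * q) = qcnj q * qcnj p" by (simp add: quat_eq_iff)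
lemma qcnj_add: "qcnj (p + q) = qcnj p + qcnj q" by (simp add: quat_eq_iff)
lemma qcnj_minus: "qcnj (- p) = - qcnj p" by (simp add: quat_eq_iff)
lemma qcnj_scaleR: "qcnj (r *\<^sub>R p) = r *\<^sub>R qcnj p" by (simp add: quat_eq_iff)
lemma qcnj_of_real: "qcnj (of_real r) = of_real r" by (simp add: quat_eq_iff of_real_def)
lemma qcnj_qcnj: "qcnj (qcnj p) = p" by (simp add: quat_eq_iff)
lemma qcnj_0: "qcnj 0 = 0" by (simp add: quat_eq_iff)
lemma qcnj_1: "qcnj 1 = 1" by (simp add: quat_eq_iff)
lemma qcnj_c_c: "qcnj c * c = of_real (Re (qcnj c * c))" by (simp add: quat_eq_iff of_real_def)
lemma c_qcnj_c: "c * qcnj c = of_real (Re (qcnj c * c))" by (simp add: quat_eq_iff of_real_def algebra_simps)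
lemma Re_cc_pos: "c \<noteq> 0 \<Longrightarrow> Re (qcnj c * c) > 0"
proof -
  assume "c \<noteq> 0"
  hence "Re c \<noteq> 0 \<or> Im1 c \<noteq> 0 \<or> Im2 c \<noteq> 0 \<or> Im3 c \<noteq> 0" by (auto simp: quat_eq_iff)
  thus ?thesis by (auto simp: power2_eq_square[symmetric]) (smt (verit) zero_le_power2 power2_less_eq_zero_iff)+
qed
lemma quat_of_real_comm: "q * of_real r = of_real r * (q::quat)" by (simp add: quat_eq_iff of_real_def)
lemma qcnj_real: "qcnj p = p \<Longrightarrow> p = of_real (Re p)" by (simp add: quat_eq_iff of_real_def)

lemma U_facts:
  fixes c :: quat and N al1 al2 be1 be2 :: real
  assumes N: "N = Re (qcnj c * c)"
  and h1: "al1 * al1 * N + be1 * be1 = 1" and h2: "al2 * al2 * N + be2 * be2 = 1"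
  and h3: "al1 * al2 * N + be1 * be2 = 0"
  and h4: "al1 * al1 * N + al2 * al2 * N = 1" and h5: "be1 * be1 + be2 * be2 = 1"
  and h6: "al1 * be1 + al2 * be2 = 0"
  shows "q_unitary (mat2 (al1 *\<^sub>R (- c)) (al2 *\<^sub>R (- c)) (of_real be1) (of_real be2))"
proof -
  have cc: "qcnj c * c = of_real N" "c * qcnj c = of_real N" unfolding N by (rule qcnj_c_c, rule c_qcnj_c)
  have N': "N = Re c * Re c + Im1 c * Im1 c + Im2 c * Im2 c + Im3 c * Im3 c" by (simp add: N)
  show ?thesis
    unfolding q_unitary_def qct_mat2 mat2_mult mat1_2 mat2_eq_iff
    apply (simp add: quat_eq_iff N of_real_def)
    apply (intro conjI)
    apply (insert h1 h2 h3 h4 h5 h6 N')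
    apply algebra+
    done
qed



lemma eig_QU:
  fixes c :: quat and N a b l1 l2 al1 al2 be1 be2 :: real
  assumes N: "N = Re (qcnj c * c)"
  and e1: "be1 = (a - l1) * al1" and e2: "be2 = (a - l2) * al2"
  and f1: "b * be1 - al1 * N = l1 * be1" and f2: "b * be2 - al2 * N = l2 * be2"
  shows "mat2 (of_real a) c (qcnj c) (of_real b) **
     mat2 (al1 *\<^sub>R (- c)) (al2 *\<^sub>R (- c)) (of_real be1) (of_real be2) = 
     mat2 (al1 *\<^sub>R (- c)) (al2 *\<^sub>R (- c)) (of_real be1) (of_real be2) ** mat2 (of_real l1) 0 0 (of_real l2)"
proof -
  have N': "N = Re c * Re c + Im1 c * Im1 c + Im2 c * Im2 c + Im3 c * Im3 c" by (simp add: N)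
  show ?thesis
    unfolding mat2_mult mat2_eq_iff
    apply (intro conjI quat_eqI)
    apply (simp_all only: of_real_def times_quat.simps scaleR_quat.simps qcnj.simps plus_quat.simps
       uminus_quat.simps minus_quat.simps zero_quat.simps one_quat.simps)
    apply (insert e1 e2 f1 f2 N')
    apply (((simp add: algebra_simps; fail) | algebra)+)
    done
qed

definition mk :: "quat ^ 'n ^ 'm \<Rightarrow> quat ^ 'n ^ 'm \<Rightarrow> dquat ^ 'n ^ 'm" where
  "mk A B = (\<chi> i j. DQ (A $ i $ j) (B $ i $ j))"

lemma dst_0: "dst 0 = 0" and dinf_0: "dinf 0 = 0" by (simp_all add: zero_dquat_def)
lemma dst_add: "dst (p + q) = dst p + dst q" and dinf_add: "dinf (p + q) = dinf p + dinf q"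
  by (simp_all add: plus_dquat_def)
lemma dst_sum: "dst (sum f S) = (\<Sum>i\<in>S. dst (f i))"
  by (induction S rule: infinite_finite_induct) (auto simp: dst_0 dst_add)
lemma dinf_sum: "dinf (sum f S) = (\<Sum>i\<in>S. dinf (f i))"
  by (induction S rule: infinite_finite_induct) (auto simp: dinf_0 dinf_add)

lemma mk_mult: "mk A B ** mk C D = mk (A ** C) (A ** D + B ** C)"
  unfolding mk_def matrix_matrix_mult_def
  by (simp add: vec_eq_iff dquat_eq_iff dst_sum dinf_sum times_dquat_def sum.distrib)

lemma mk_eq_iff: "mk A B = mk C D \<longleftrightarrow> A = C \<and> B = D"
  unfolding mk_def by (auto simp: vec_eq_iff)

lemma dct_mk: "dct (mk A B) = mk (qct A) (qct B)"
  unfolding mk_def dct_def qct_def dcnj_def by (simp add: vec_eq_iff)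

lemma dq_mat_mk: "dq_mat A = mk A 0"
  unfolding mk_def dq_mat_def dq_of_def by (simp add: vec_eq_iff)

lemma mk_st_inf: "A = mk (st_mat A) (inf_mat A)"
  unfolding mk_def st_mat_def inf_mat_def by (simp add: vec_eq_iff dquat_eq_iff)

lemma mat1_mk: "(mat 1 :: dquat^'n^'n) = mk (mat 1) 0"
  unfolding mk_def mat_def by (simp add: vec_eq_iff dquat_eq_iff one_dquat_def zero_dquat_def)

lemma mk_mat2: "mk (mat2 p q r s) (mat2 p2 q2 r2 s2) = mat2 (DQ p p2) (DQ q q2) (DQ r r2) (DQ s s2)"
  by (subst mat2_of) (simp add: mk_def mat2_idx)

lemma qcnj_sum: "qcnj (sum f S) = (\<Sum>i\<in>S. qcnj (f i))"
  by (induction S rule: infinite_finite_induct) (auto simp: qcnj_0 qcnj_add)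

lemma qct_mult: "qct (A ** B) = qct B ** qct A"
  unfolding qct_def matrix_matrix_mult_def
  by (simp add: vec_eq_iff qcnj_mult qcnj_sum)



lemma matrix_add_rdistrib': "((B + C) ** A) = (B ** A) + (C ** A)"
  by (vector matrix_matrix_mult_def sum.distrib[symmetric] field_simps)

lemma qct_qct: "qct (qct A) = A" unfolding qct_def by (simp add: vec_eq_iff qcnj_qcnj)
lemma qct_add: "qct (A + B) = qct A + qct B" unfolding qct_def by (simp add: vec_eq_iff qcnj_add)
lemma qct_0: "qct 0 = 0" unfolding qct_def by (simp add: vec_eq_iff qcnj_0)
lemma qct_1: "qct (mat 1) = mat 1" unfolding qct_def mat_def by (simp add: vec_eq_iff qcnj_0 qcnj_1)

theorem proposition3p4:
  fixes Q :: "dquat ^ 2 ^ 2" and a b l1 l2 :: real and c :: quat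
  assumes herm: "dq_hermitian Q"
    and st: "st_mat Q = mat2 (of_real a) c (qcnj c) (of_real b)"
    and c0: "c \<noteq> 0"
    and l12: "l1 \<noteq> l2"
    and root1: "of_real ((a - l1) * (b - l1)) = qcnj c * c"
    and root2: "of_real ((a - l2) * (b - l2)) = qcnj c * c"
  defines "s1 \<equiv> sqrt ((a - l1)\<^sup>2 + Re (qcnj c * c))"
    and "s2 \<equiv> sqrt ((a - l2)\<^sup>2 + Re (qcnj c * c))"
  defines "U \<equiv> mat2 ((1 / s1) *\<^sub>R (- c)) ((1 / s2) *\<^sub>R (- c))
                    (of_real ((a - l1) / s1)) (of_real ((a - l2) / s2))"
  defines "W \<equiv> qct U ** inf_mat Q ** U"
  defines "x \<equiv> W $ 1 $ 1" and "z \<equiv> W $ 1 $ 2" and "y \<equiv> W $ 2 $ 2"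
  defines "V \<equiv> mat2 1 (DQ 0 ((1 / (l2 - l1)) *\<^sub>R z))
                    (DQ 0 ((1 / (l1 - l2)) *\<^sub>R qcnj z)) 1"
  shows "q_unitary U
    \<and> qct U ** st_mat Q ** U = mat2 (of_real l1) 0 0 (of_real l2)
    \<and> W = mat2 x z (qcnj z) y
    \<and> dct V ** dct (dq_mat U) ** dct Q ** dq_mat U ** V
           = mat2 (DQ (of_real l1) x) 0 0 (DQ (of_real l2) y)
    \<and> dn_diagonal (dct V ** dct (dq_mat U) ** dct Q ** dq_mat U ** V)
    \<and> dq_unitary (dq_mat U ** V)"
proof -
  define N where "N = Re (qcnj c * c)"
  have Npos: "N > 0" unfolding N_def using c0 by (rule Re_cc_pos)
  have r1: "(a - l1) * (b - l1) = N" using arg_cong[OF root1, of Re] unfolding N_def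
    by (simp add: of_real_def)
  have r2: "(a - l2) * (b - l2) = N" using arg_cong[OF root2, of Re] unfolding N_def
    by (simp add: of_real_def)
  define d1 where "d1 = a - l1"
  define d2 where "d2 = a - l2"
  have sum: "l1 + l2 = a + b"
  proof -
    have "(l2 - l1) * (a + b - l1 - l2) = (a - l1) * (b - l1) - (a - l2) * (b - l2)"
      by (simp add: algebra_simps)
    also have "\<dots> = 0" using r1 r2 by simp
    finally have "(l2 - l1) * (a + b - l1 - l2) = 0" .
    thus ?thesis using l12 by simp
  qed
  have e: "a - l2 = l1 - b" using sum by linarith
  have "(a - l1) * (a - l2) = (a - l1) * (l1 - b)" by (simp only: e)
  also have "\<dots> = - ((a - l1) * (b - l1))" by (simp add: algebra_simps)
  finally have "(a - l1) * (a - l2) = - ((a - l1) * (b - l1))" .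
  hence dd: "d1 * d2 = - N" unfolding d1_def d2_def using r1 by simp
  have d1ne: "d1 \<noteq> 0" and d2ne: "d2 \<noteq> 0" using dd Npos by auto
  have d12: "d1 - d2 \<noteq> 0" unfolding d1_def d2_def using l12 by simp
  have "s1 * s1 = d1\<^sup>2 + N"
    unfolding s1_def N_def[symmetric] d1_def[symmetric]
    using Npos by (simp add: abs_of_nonneg)
  also have "\<dots> = d1 * (d1 - d2)" using dd by (simp add: algebra_simps power2_eq_square)
  finally have s1sq: "s1 * s1 = d1 * (d1 - d2)" .
  have "s2 * s2 = d2\<^sup>2 + N"
    unfolding s2_def N_def[symmetric] d2_def[symmetric]
    using Npos by (simp add: abs_of_nonneg)
  also have "\<dots> = d2 * (d2 - d1)" using dd by (simp add: algebra_simps power2_eq_square)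
  finally have s2sq: "s2 * s2 = d2 * (d2 - d1)" .
  have s1ne: "s1 \<noteq> 0" using s1sq d1ne d12 by auto
  have s2ne: "s2 \<noteq> 0" using s2sq d2ne d12 by auto
  define al1 where "al1 = 1 / s1"
  define al2 where "al2 = 1 / s2"
  define be1 where "be1 = (a - l1) / s1"
  define be2 where "be2 = (a - l2) / s2"
  have Ueq: "U = mat2 (al1 *\<^sub>R (- c)) (al2 *\<^sub>R (- c)) (of_real be1) (of_real be2)"
    unfolding U_def al1_def al2_def be1_def be2_def ..
  have "be1 = d1 * al1" "be2 = d2 * al2" unfolding al1_def al2_def be1_def be2_def d1_def d2_def by auto
  have Nd: "N = - (d1 * d2)" using dd by simp
  have d21: "d2 - d1 \<noteq> 0" using d12 by simp
  have ss1: "s1 * s1 = d1 * d1 + N" and ss2: "s2 * s2 = d2 * d2 + N"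
    using s1sq s2sq Nd by (simp_all add: algebra_simps)
  have al1sq: "al1 * al1 = 1 / (d1 * (d1 - d2))" unfolding al1_def using s1sq by simp
  have al2sq: "al2 * al2 = 1 / (d2 * (d2 - d1))" unfolding al2_def using s2sq by simp
  have be1sq: "be1 * be1 = d1 * d1 / (d1 * (d1 - d2))" unfolding be1_def d1_def[symmetric] using s1sq
    by (simp add: power2_eq_square[symmetric] power_divide)
  have be2sq: "be2 * be2 = d2 * d2 / (d2 * (d2 - d1))" unfolding be2_def d2_def[symmetric] using s2sq
    by (simp add: power2_eq_square[symmetric] power_divide)
  have p1: "d1 * (d1 - d2) \<noteq> 0" using d1ne d12 by simp
  have p2: "d2 * (d2 - d1) \<noteq> 0" using d2ne d21 by simp
  have gen: "\<And>p u v. p \<noteq> 0 \<Longrightarrow> (1 / p) * u + v / p = (u + v) / (p::real)"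
    by (simp add: field_simps)
  have h1: "al1 * al1 * N + be1 * be1 = 1"
    unfolding al1sq be1sq gen[OF p1] using p1 by (simp add: Nd algebra_simps)
  have h2: "al2 * al2 * N + be2 * be2 = 1"
    unfolding al2sq be2sq gen[OF p2] using p2 by (simp add: Nd algebra_simps)
  have h3: "al1 * al2 * N + be1 * be2 = 0"
  proof -
    have "al1 * al2 * N + be1 * be2 = (N + d1 * d2) / (s1 * s2)"
      unfolding al1_def al2_def be1_def be2_def d1_def d2_def using s1ne s2ne by (simp add: field_simps)
    thus ?thesis using dd by simp
  qed
  have h4: "al1 * al1 * N + al2 * al2 * N = 1"
    unfolding al1sq al2sq Nd using d1ne d2ne d12 d21 p1 p2 by (simp add: divide_simps) (simp add: algebra_simps)
  have h5: "be1 * be1 + be2 * be2 = 1"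
    unfolding be1sq be2sq using d1ne d2ne d12 d21 p1 p2 by (simp add: divide_simps) (simp add: algebra_simps)
  have h6: "al1 * be1 + al2 * be2 = 0"
  proof -
    have "al1 * be1 = d1 / (d1 * (d1 - d2))" unfolding al1_def be1_def d1_def[symmetric] using s1sq
      by (simp add: field_simps)
    also have "\<dots> = 1 / (d1 - d2)" using d1ne by simp
    finally have A: "al1 * be1 = 1 / (d1 - d2)" .
    have "al2 * be2 = d2 / (d2 * (d2 - d1))" unfolding al2_def be2_def d2_def[symmetric] using s2sq
      by (simp add: field_simps)
    also have "\<dots> = 1 / (d2 - d1)" using d2ne by simp
    also have "\<dots> = - (1 / (d1 - d2))" by (simp add: divide_simps)
    finally have B: "al2 * be2 = - (1 / (d1 - d2))" .
    show ?thesis unfolding A B by simp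
  qed
  have e1: "be1 = (a - l1) * al1" and e2: "be2 = (a - l2) * al2"
    unfolding al1_def al2_def be1_def be2_def by auto
  have f1: "b * be1 - al1 * N = l1 * be1"
  proof -
    have "b * be1 - al1 * N - l1 * be1 = ((a - l1) * (b - l1) - N) / s1"
      unfolding al1_def be1_def using s1ne by (simp add: field_simps)
    thus ?thesis using r1 by simp
  qed
  have f2: "b * be2 - al2 * N = l2 * be2"
  proof -
    have "b * be2 - al2 * N - l2 * be2 = ((a - l2) * (b - l2) - N) / s2"
      unfolding al2_def be2_def using s2ne by (simp add: field_simps)
    thus ?thesis using r2 by simp
  qed
  have unitU: "q_unitary U" unfolding Ueq by (rule U_facts[OF N_def h1 h2 h3 h4 h5 h6])
  have QU: "st_mat Q ** U = U ** mat2 (of_real l1) 0 0 (of_real l2)"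
    unfolding Ueq st by (rule eig_QU[OF N_def e1 e2 f1 f2])
  have diagL: "qct U ** st_mat Q ** U = mat2 (of_real l1) 0 0 (of_real l2)"
    using unitU unfolding q_unitary_def
    by (simp add: matrix_mul_assoc[symmetric] QU) (simp add: matrix_mul_assoc)
  define Qs where "Qs = st_mat Q"
  define QI where "QI = inf_mat Q"
  have Qmk: "Q = mk Qs QI" unfolding Qs_def QI_def by (rule mk_st_inf)
  have dQ: "dct Q = Q" using herm unfolding dq_hermitian_def .
  have hQI: "qct QI = QI" using dQ unfolding Qmk dct_mk mk_eq_iff by simp
  have hW: "qct W = W" unfolding W_def QI_def[symmetric]
    by (simp add: qct_mult qct_qct hQI matrix_mul_assoc)
  have W21: "W $ 2 $ 1 = qcnj z" unfolding z_def
    using arg_cong[OF hW, of "\<lambda>A. A $ 2 $ 1"] by (simp add: qct_def qcnj_qcnj)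
  have Wx: "qcnj x = x" unfolding x_def
    using arg_cong[OF hW, of "\<lambda>A. A $ 1 $ 1"] by (simp add: qct_def)
  have Wy: "qcnj y = y" unfolding y_def
    using arg_cong[OF hW, of "\<lambda>A. A $ 2 $ 2"] by (simp add: qct_def)
  have Wmat: "W = mat2 x z (qcnj z) y"
    by (subst mat2_of) (simp add: W21 x_def y_def z_def)
  define E where "E = mat2 0 ((1 / (l2 - l1)) *\<^sub>R z) ((1 / (l1 - l2)) *\<^sub>R qcnj z) 0"
  have Vmk: "V = mk (mat 1) E"
    unfolding V_def E_def mat1_2 mk_mat2 by (simp add: one_dquat_def)
  have EE: "qct E + E = 0"
  proof -
    have "qct E + E = mat2 0 0 0 0"
      unfolding E_def qct_mat2
      by (simp add: mat2_def vec_eq_iff forall_2 qcnj_scaleR qcnj_qcnj qcnj_0 scaleR_add_left[symmetric]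
           divide_simps l12 l12[symmetric])
    moreover have "mat2 0 0 0 (0::quat) = 0" by (subst mat2_of[of 0]) simp
    ultimately show ?thesis by simp
  qed
  define L where "L = mat2 (of_real l1) 0 0 (of_real l2 :: quat)"
  have LEW: "W + qct E ** L + L ** E = mat2 x 0 0 y"
    unfolding Wmat E_def L_def qct_mat2 mat2_mult
    unfolding mat2_def
    apply (simp add: vec_eq_iff forall_2)
    apply (intro conjI quat_eqI)
    apply (simp_all add: of_real_def)
    using l12 by (simp_all add: field_simps)
  have prod: "dct V ** dct (dq_mat U) ** dct Q ** dq_mat U ** V
           = mat2 (DQ (of_real l1) x) 0 0 (DQ (of_real l2) y)"
  proof -
    have "qct E ** (qct U ** Qs ** U) = qct E ** L" using diagL[folded Qs_def L_def] by simp
    hence D: "qct E ** qct U ** Qs ** U = qct E ** L" by (simp add: matrix_mul_assoc)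
    have "dct V ** dct (dq_mat U) ** dct Q ** dq_mat U ** V = mk L (W + qct E ** L + L ** E)"
      unfolding dQ unfolding Qmk Vmk dq_mat_mk dct_mk qct_1 qct_0 mk_mult
      using diagL[folded Qs_def L_def] unfolding W_def QI_def[symmetric]
      by (simp add: matrix_add_ldistrib matrix_add_rdistrib' matrix_mul_assoc D add_ac)
    also have "\<dots> = mat2 (DQ (of_real l1) x) 0 0 (DQ (of_real l2) y)"
      unfolding LEW unfolding L_def mk_mat2 by (simp add: zero_dquat_def)
    finally show ?thesis .
  qed
  define X where "X = dq_mat U ** V"
  have Xmk: "X = mk U (U ** E)" unfolding X_def dq_mat_mk Vmk mk_mult by simp
  have uu: "qct U ** U = mat 1" "U ** qct U = mat 1" using unitU unfolding q_unitary_def by auto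
  have dX: "dct X = mk (qct U) (qct E ** qct U)" unfolding Xmk dct_mk qct_mult ..
  have un1: "dct X ** X = mat 1"
  proof -
    have "dct X ** X = mk (mat 1) (qct U ** (U ** E) + qct E ** qct U ** U)"
      unfolding dX unfolding Xmk mk_mult uu ..
    also have "qct U ** (U ** E) + qct E ** qct U ** U = qct E + E"
      by (simp add: matrix_mul_assoc uu add_ac flip: matrix_mul_assoc[of "qct E"])
    finally show ?thesis using EE by (simp add: mat1_mk[symmetric])
  qed
  have un2: "X ** dct X = mat 1"
  proof -
    have "X ** dct X = mk (mat 1) (U ** (qct E ** qct U) + U ** E ** qct U)"
      unfolding dX unfolding Xmk mk_mult uu by simp
    also have "U ** (qct E ** qct U) + U ** E ** qct U = U ** (qct E + E) ** qct U"
      by (simp add: matrix_mul_assoc matrix_add_ldistrib matrix_add_rdistrib')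
    finally show ?thesis using EE by (simp add: mat1_mk[symmetric])
  qed
  have xr: "x \<in> range of_real" using qcnj_real[OF Wx] by (metis rangeI)
  have yr: "y \<in> range of_real" using qcnj_real[OF Wy] by (metis rangeI)
  have zr: "(0::quat) \<in> range of_real" by (metis of_real_0 rangeI)
  have dn: "dn_diagonal (mat2 (DQ (of_real l1) x) 0 0 (DQ (of_real l2) y))"
    unfolding dn_diagonal_def dual_number_def
    by (simp add: mat2_def forall_2 xr yr zr zero_dquat_def)
  show ?thesis
    using unitU diagL Wmat prod dn un1 un2 unfolding dq_unitary_def X_def by simp
qed

end
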